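(* Let $\mathcal{A}$ be a finite set of alternatives, $N\ge2$, $i\in\{1,\dots,N\}$, and $w:\underline{\mathcal{P}}^N\to\underline{\mathcal{P}}$ satisfy Unanimity and IIA. If $w$ has a dictator at $i$ and satisfies Unrestricted Domain, then the self-reference system $(w,\Omega_i)$ with valid elements $\mathcal{P}^N$ is not quasi-Gödelian with respect to $\Upsilon_i=(\mathbf{c},\dots,\mathbf{i},\dots,\mathbf{c})$.
   Context: $\mathcal{P}$: weak orders on $\mathcal{A}$; $\underline{\mathcal{P}}=\mathcal{P}\cup\{\mathbf{c}\}$, $\mathbf{c}$ a new element (contradictory preference cycle). Strictness order: $r\le s$ iff every strict preference of $s$ is one of $r$; $\mathbf{c}$ bottom, $\mathbf{i}$ (total indifference) top; $\wedge,\vee$ meet and join; $\neg\mathbf{c}=\mathbf{i}$, $\neg\mathbf{i}=\mathbf{c}$, otherwise $\neg r$ reverses all strict preferences of $r$. On $\underline{\mathcal{P}}^N$ operations and order are coordinatewise; valid elements are $\mathcal{P}^N$; $p,q$ are inconsistent if $p_j\wedge q_j=\mathbf{c}$ for some $j$. $\Omega_i((p_1,\dots,p_N),r)=(\mathbf{c},\dots,p_i\wedge r,\dots,\mathbf{c})$; $e\ast f:=\Omega_i(e,w(f))$. For $d\in\mathcal{P}^N$: $d$ is a quasi-Gödel sentence w.r.t. $\Upsilon$ if $d\le\neg(\Upsilon\ast d)$; $(\Upsilon,d)$ is quasi-consistent if $d\le\neg(\Upsilon\ast\neg d)$ and quasi-complete if $\neg(\Upsilon\ast d)$, $\neg(\Upsilon\ast\neg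 d)$ are inconsistent. The system is quasi-Gödelian w.r.t. $\Upsilon$ if some $d\in\mathcal{P}^N$ is a quasi-Gödel sentence and $(\Upsilon,d)$ does not satisfy both quasi-consistency and quasi-completeness. Unanimity: if all individuals of $p\in\mathcal{P}^N$ strictly prefer $a$ to $b$, so does $w(p)$. IIA: aggregate comparison of $a,b$ depends only on individuals' comparisons of $a,b$. Dictator at $i$: for all $p\in\mathcal{P}^N$, $w(p)=\mathbf{c}\Rightarrow p_i=\mathbf{i}$ and $p_i\ne\mathbf{i}\Rightarrow w(p)\le p_i$. Unrestricted Domain: $w(\mathcal{P}^N)=\mathcal{P}$. *)

theory Defs
  imports Main
begin

text \<open>The extended set of preferences (underline P) is represented by
"'a rel option": None is the contradictory element c, Some r a weak order r.\<close>

definition weak_order :: "'a set \<Rightarrow> 'a rel \<Rightarrow> bool" where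
  "weak_order A r \<longleftrightarrow> r \<subseteq> A \<times> A \<and> (\<forall>a\<in>A. \<forall>b\<in>A. (a,b) \<in> r \<or> (b,a) \<in> r) \<and> trans r"

definition Pset :: "'a set \<Rightarrow> 'a rel option set" where
  "Pset A = Some ` {r. weak_order A r}"

definition Pbar :: "'a set \<Rightarrow> 'a rel option set" where
  "Pbar A = insert None (Pset A)"

definition indiff :: "'a set \<Rightarrow> 'a rel option" where
  "indiff A = Some (A \<times> A)"

definition strict_part :: "'a rel \<Rightarrow> 'a rel" where
  "strict_part r = {(a,b). (a,b) \<in> r \<and> (b,a) \<notin> r}"

definition ple :: "'a rel option \<Rightarrow> 'a rel option \<Rightarrow> bool" where
  "ple x y = (case x of None \<Rightarrow> True
     | Some r \<Rightarrow> (case y of None \<Rightarrow> False | Some s \<Rightarrow> strict_part s \<subseteq> strict_part r))"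

definition pmeet :: "'a set \<Rightarrow> 'a rel option \<Rightarrow> 'a rel option \<Rightarrow> 'a rel option" where
  "pmeet A x y = (THE z. z \<in> Pbar A \<and> ple z x \<and> ple z y \<and>
      (\<forall>u\<in>Pbar A. ple u x \<and> ple u y \<longrightarrow> ple u z))"

definition pneg :: "'a set \<Rightarrow> 'a rel option \<Rightarrow> 'a rel option" where
  "pneg A x = (case x of None \<Rightarrow> indiff A
     | Some r \<Rightarrow> (if Some r = indiff A then None else Some (r\<inverse>)))"

text \<open>Profiles: functions from a finite index type 'n (the individuals) to underline P.\<close>
definition valid :: "'a set \<Rightarrow> ('n \<Rightarrow> 'a rel option) set" where
  "valid A = {p. \<forall>j. p j \<in> Pset A}"

definition validbar :: "'a set \<Rightarrow> ('n \<Rightarrow> 'a rel option) set" where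
  "validbar A = {p. \<forall>j. p j \<in> Pbar A}"

definition prof_le :: "('n \<Rightarrow> 'a rel option) \<Rightarrow> ('n \<Rightarrow> 'a rel option) \<Rightarrow> bool" where
  "prof_le p q \<longleftrightarrow> (\<forall>j. ple (p j) (q j))"

definition prof_neg :: "'a set \<Rightarrow> ('n \<Rightarrow> 'a rel option) \<Rightarrow> ('n \<Rightarrow> 'a rel option)" where
  "prof_neg A p = (\<lambda>j. pneg A (p j))"

definition inconsistent :: "'a set \<Rightarrow> ('n \<Rightarrow> 'a rel option) \<Rightarrow> ('n \<Rightarrow> 'a rel option) \<Rightarrow> bool" where
  "inconsistent A p q \<longleftrightarrow> (\<exists>j. pmeet A (p j) (q j) = None)"

definition Omega :: "'a set \<Rightarrow> 'n \<Rightarrow> ('n \<Rightarrow> 'a rel option) \<Rightarrow> 'a rel option \<Rightarrow> ('n \<Rightarrow> 'a rel option)" where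
  "Omega A i p r = (\<lambda>j. if j = i then pmeet A (p i) r else None)"

definition star :: "'a set \<Rightarrow> 'n \<Rightarrow> (('n \<Rightarrow> 'a rel option) \<Rightarrow> 'a rel option)
     \<Rightarrow> ('n \<Rightarrow> 'a rel option) \<Rightarrow> ('n \<Rightarrow> 'a rel option) \<Rightarrow> ('n \<Rightarrow> 'a rel option)" where
  "star A i w e f = Omega A i e (w f)"

definition Upsilon :: "'a set \<Rightarrow> 'n \<Rightarrow> ('n \<Rightarrow> 'a rel option)" where
  "Upsilon A i = (\<lambda>j. if j = i then indiff A else None)"

definition quasi_goedel_sentence where
  "quasi_goedel_sentence A i w Y d \<longleftrightarrow>
     d \<in> valid A \<and> prof_le d (prof_neg A (star A i w Y d))"

definition quasi_consistent where
  "quasi_consistent A i w Y d \<longleftrightarrow> prof_le d (prof_neg A (star A i w Y (prof_neg A d)))"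

definition quasi_complete where
  "quasi_complete A i w Y d \<longleftrightarrow>
     inconsistent A (prof_neg A (star A i w Y d)) (prof_neg A (star A i w Y (prof_neg A d)))"

definition quasi_goedelian where
  "quasi_goedelian A i w Y \<longleftrightarrow>
     (\<exists>d \<in> valid A. quasi_goedel_sentence A i w Y d \<and>
        \<not> (quasi_consistent A i w Y d \<and> quasi_complete A i w Y d))"

text \<open>Strict preference of a (valid) preference; the bottom c is regarded as containing
every strict preference (it is below everything in the strictness order).\<close>
definition sprefers :: "'a rel option \<Rightarrow> 'a \<Rightarrow> 'a \<Rightarrow> bool" where
  "sprefers x a b = (case x of None \<Rightarrow> True | Some r \<Rightarrow> (a,b) \<in> strict_part r)"

definition unanimity :: "'a set \<Rightarrow> (('n \<Rightarrow> 'a rel option) \<Rightarrow> 'a rel option) \<Rightarrow> bool" where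
  "unanimity A w \<longleftrightarrow> (\<forall>p\<in>valid A. \<forall>a\<in>A. \<forall>b\<in>A.
      (\<forall>j. sprefers (p j) a b) \<longrightarrow> sprefers (w p) a b)"

definition comp_ab :: "'a rel option \<Rightarrow> 'a \<Rightarrow> 'a \<Rightarrow> (bool \<times> bool) option" where
  "comp_ab x a b = map_option (\<lambda>r. ((a,b) \<in> r, (b,a) \<in> r)) x"

definition IIA :: "'a set \<Rightarrow> (('n \<Rightarrow> 'a rel option) \<Rightarrow> 'a rel option) \<Rightarrow> bool" where
  "IIA A w \<longleftrightarrow> (\<forall>p\<in>valid A. \<forall>q\<in>valid A. \<forall>a\<in>A. \<forall>b\<in>A.
      (\<forall>j. comp_ab (p j) a b = comp_ab (q j) a b) \<longrightarrow> comp_ab (w p) a b = comp_ab (w q) a b)"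

definition dictator_at :: "'a set \<Rightarrow> (('n \<Rightarrow> 'a rel option) \<Rightarrow> 'a rel option) \<Rightarrow> 'n \<Rightarrow> bool" where
  "dictator_at A w i \<longleftrightarrow> (\<forall>p\<in>valid A.
      (w p = None \<longrightarrow> p i = indiff A) \<and> (p i \<noteq> indiff A \<longrightarrow> ple (w p) (p i)))"

definition unrestricted_domain :: "'a set \<Rightarrow> (('n \<Rightarrow> 'a rel option) \<Rightarrow> 'a rel option) \<Rightarrow> bool" where
  "unrestricted_domain A w \<longleftrightarrow> w ` valid A = Pset A"

end

theory Submission
  imports Defs
begin

lemma wo_eq:
  assumes "weak_order A r" "weak_order A s" "strict_part r = strict_part s"
  shows "r = s"
proof -
  have "(a,b) \<in> r \<longleftrightarrow> (a,b) \<in> s" for a b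
  proof -
    have ra: "r \<subseteq> A \<times> A" "s \<subseteq> A \<times> A" using assms unfolding weak_order_def by auto
    show ?thesis
    proof (cases "a \<in> A \<and> b \<in> A")
      case True
      have "(a,b) \<in> r \<longleftrightarrow> (b,a) \<notin> strict_part r" using assms(1) True
        unfolding weak_order_def strict_part_def by blast
      moreover have "(a,b) \<in> s \<longleftrightarrow> (b,a) \<notin> strict_part s" using assms(2) True
        unfolding weak_order_def strict_part_def by blast
      ultimately show ?thesis using assms(3) by simp
    next
      case False then show ?thesis using ra by auto
    qed
  qed
  then show ?thesis by auto
qed

lemma wo_full: "weak_order A (A \<times> A)"
  unfolding weak_order_def trans_def by auto

lemma ple_antisym:
  assumes "x \<in> Pbar A" "y \<in> Pbar A" "ple x y" "ple y x" shows "x = y"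
  using assms wo_eq unfolding Pbar_def Pset_def ple_def
  by (auto split: option.splits)

lemma meet_top:
  assumes "x \<in> Pbar A" shows "pmeet A (indiff A) x = x"
  unfolding pmeet_def
proof (rule the_equality)
  have t: "ple z (indiff A)" if "z \<in> Pbar A" for z
    using that unfolding ple_def indiff_def strict_part_def Pbar_def Pset_def by (auto split: option.splits)
  have r: "ple z z" for z :: "'a rel option" unfolding ple_def by (auto split: option.splits)
  show "x \<in> Pbar A \<and> ple x (indiff A) \<and> ple x x \<and> (\<forall>u\<in>Pbar A. ple u (indiff A) \<and> ple u x \<longrightarrow> ple u x)"
    using assms t r by auto
  fix z assume z: "z \<in> Pbar A \<and> ple z (indiff A) \<and> ple z x \<and> (\<forall>u\<in>Pbar A. ple u (indiff A) \<and> ple u x \<longrightarrow> ple u z)"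
  then have "ple x z" using assms t r by blast
  then show "z = x" using z assms ple_antisym by blast
qed

theorem theorem12:
  fixes A :: "'a set"
    and w :: "('n::finite \<Rightarrow> 'a rel option) \<Rightarrow> 'a rel option"
    and i :: 'n
  assumes "finite A"
    and "card (UNIV :: 'n set) \<ge> 2"
    and "\<forall>p \<in> validbar A. w p \<in> Pbar A"
    and "unanimity A w"
    and "IIA A w"
    and "dictator_at A w i"
    and "unrestricted_domain A w"
  shows "\<not> quasi_goedelian A i w (Upsilon A i)"
proof
  assume "quasi_goedelian A i w (Upsilon A i)"
  then obtain d where d: "d \<in> valid A" and g: "ple (d i) (prof_neg A (star A i w (Upsilon A i) d) i)"
    unfolding quasi_goedelian_def quasi_goedel_sentence_def prof_le_def by blast
  have "w d \<in> Pset A" using assms(7) d unfolding unrestricted_domain_def by blast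
  then obtain r where wd: "w d = Some r" and wo: "weak_order A r" unfolding Pset_def by auto
  have "w d \<in> Pbar A" using \<open>w d \<in> Pset A\<close> unfolding Pbar_def by auto
  then have st: "star A i w (Upsilon A i) d i = Some r"
    unfolding star_def Omega_def Upsilon_def using meet_top wd by simp
  obtain s where di: "d i = Some s" and wos: "weak_order A s"
    using d unfolding valid_def Pset_def by auto
  have g2: "ple (Some s) (pneg A (Some r))" using g st di unfolding prof_neg_def by simp
  show False
  proof (cases "Some r = indiff A")
    case True
    then show ?thesis using g2 unfolding pneg_def ple_def by (simp add: indiff_def)
  next
    case False
    then have a: "strict_part (r\<inverse>) \<subseteq> strict_part s" using g2 unfolding pneg_def ple_def by simp
    have b: "strict_part s \<subseteq> strict_part r"
    proof (cases "d i = indiff A")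
      case True then show ?thesis using di unfolding indiff_def strict_part_def by auto
    next
      case False
      have "ple (w d) (d i)" using assms(6) d False unfolding dictator_at_def by blast
      then show ?thesis using di wd unfolding ple_def by simp
    qed
    have "strict_part r = strict_part (A \<times> A)"
      using a b unfolding strict_part_def by auto
    then have "r = A \<times> A" using wo_eq[OF wo wo_full] by simp
    then show False using False unfolding indiff_def by simp
  qed
qed

end
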